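(* Suppose the density $f$ is symmetric about $\mu$, i.e. $f(x)=f(2\mu-x)$ for all $x$, and that the misplacement probabilities satisfy $\alpha_{d_j,d_h}=\alpha_{d_{n-j+1},d_{n-h+1}}$ for all $j,h=1,\dots,n$. Let $\hat f_{\text{PROS}}$ be the kernel density estimator based on a $\text{PROS}_{\boldsymbol{\alpha}}(n,L,s,D)$ sample of size $N=nL$ from $f$, and define $$\hat{f}^*_{\text{PROS}}(x,\mu)=\tfrac12\big(\hat{f}_{\text{PROS}}(x)+\hat{f}_{\text{PROS}}(2\mu-x)\big).$$ Then (i) $\mathbb{E}[\hat{f}^*_{\text{PROS}}(x,\mu)]=\mathbb{E}[\hat{f}_{\text{PROS}}(x)]$, and (ii) $\mathrm{var}(\hat{f}^*_{\text{PROS}}(x,\mu))\le\mathrm{var}(\hat{f}_{\text{PROS}}(x))$.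
   Context: Let $f$ be a density with cdf $F$. Fix positive integers $s,n,L$ with $m=s/n$ an integer and $d_j=\{(j-1)m+1,\dots,jm\}$. Let $\boldsymbol{\alpha}=(\alpha_{d_j,d_h})$ be an $n\times n$ doubly stochastic matrix of misplacement probabilities. $f_{(u:s)}(x)=\frac{s!}{(u-1)!(s-u)!}F(x)^{u-1}(1-F(x))^{s-u}f(x)$ and $f_{[d_j]}(x)=\frac1m\sum_{h=1}^n\sum_{u\in d_h}\alpha_{d_j,d_h}f_{(u:s)}(x)$. A $\text{PROS}_{\boldsymbol{\alpha}}(n,L,s,D)$ sample is a family of independent $X_{[d_j]i}$ ($j\le n$, $i\le L$) with $X_{[d_j]i}\sim f_{[d_j]}$. With $K$ a symmetric second-order kernel ($\int K=1$, $\int K^2<\infty$, $\int x^2K<\infty$) and bandwidth $h>0$, $\hat{f}_{\text{PROS}}(x)=\frac{1}{nLh}\sum_{i=1}^L\sum_{j=1}^nK\big(\frac{x-X_{[d_j]i}}{h}\big)$. *)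

theory Defs
  imports "HOL-Probability.Probability"
begin

definition ord_stat_density :: "nat \<Rightarrow> nat \<Rightarrow> (real \<Rightarrow> real) \<Rightarrow> (real \<Rightarrow> real) \<Rightarrow> real \<Rightarrow> real" where
  "ord_stat_density s u F f x =
     fact s / (fact (u - 1) * fact (s - u)) * F x ^ (u - 1) * (1 - F x) ^ (s - u) * f x"

definition block :: "nat \<Rightarrow> nat \<Rightarrow> nat \<Rightarrow> nat set" where
  "block s n j = {(j - 1) * (s div n) + 1 .. j * (s div n)}"

definition pros_density :: "nat \<Rightarrow> nat \<Rightarrow> (nat \<Rightarrow> nat \<Rightarrow> real) \<Rightarrow> (real \<Rightarrow> real) \<Rightarrow> (real \<Rightarrow> real)
    \<Rightarrow> nat \<Rightarrow> real \<Rightarrow> real" where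
  "pros_density s n \<alpha> F f j x =
     (1 / real (s div n)) * (\<Sum>h\<in>{1..n}. \<Sum>u\<in>block s n h. \<alpha> j h * ord_stat_density s u F f x)"

definition doubly_stochastic :: "nat \<Rightarrow> (nat \<Rightarrow> nat \<Rightarrow> real) \<Rightarrow> bool" where
  "doubly_stochastic n \<alpha> \<longleftrightarrow>
     (\<forall>j\<in>{1..n}. \<forall>h\<in>{1..n}. 0 \<le> \<alpha> j h) \<and>
     (\<forall>j\<in>{1..n}. (\<Sum>h\<in>{1..n}. \<alpha> j h) = 1) \<and>
     (\<forall>h\<in>{1..n}. (\<Sum>j\<in>{1..n}. \<alpha> j h) = 1)"

definition pros_kde :: "nat \<Rightarrow> nat \<Rightarrow> real \<Rightarrow> (real \<Rightarrow> real) \<Rightarrow> (nat \<Rightarrow> nat \<Rightarrow> 'a \<Rightarrow> real)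
    \<Rightarrow> real \<Rightarrow> 'a \<Rightarrow> real" where
  "pros_kde n L h K X x \<omega> =
     (1 / (real n * real L * h)) * (\<Sum>i\<in>{1..L}. \<Sum>j\<in>{1..n}. K ((x - X j i \<omega>) / h))"

definition pros_kde_sym :: "nat \<Rightarrow> nat \<Rightarrow> real \<Rightarrow> (real \<Rightarrow> real) \<Rightarrow> (nat \<Rightarrow> nat \<Rightarrow> 'a \<Rightarrow> real)
    \<Rightarrow> real \<Rightarrow> real \<Rightarrow> 'a \<Rightarrow> real" where
  "pros_kde_sym n L h K X x \<mu> \<omega> =
     (pros_kde n L h K X x \<omega> + pros_kde n L h K X (2 * \<mu> - x) \<omega>) / 2"

end

theory Submission
  imports Defs
begin


lemma F_refl:
  fixes f F :: "real \<Rightarrow> real"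
  assumes f_meas: "f \<in> borel_measurable borel"
    and f_int: "integrable lborel f" "integral\<^sup>L lborel f = 1"
    and F_def: "\<And>t. F t = (LINT y:{..t}|lborel. f y)"
    and f_sym: "\<And>t. f t = f (2 * \<mu> - t)"
  shows "F (2 * \<mu> - t) = 1 - F t"
proof -
  have "F (2 * \<mu> - t) = (\<integral>y. indicator {..2*\<mu>-t} y * f y \<partial>lborel)"
    by (simp add: F_def set_lebesgue_integral_def)
  also have "\<dots> = \<bar>-1\<bar> *\<^sub>R (\<integral>y. indicator {..2*\<mu>-t} (2*\<mu> + (-1) * y) * f (2*\<mu> + (-1) * y) \<partial>lborel)"
    by (rule lborel_integral_real_affine) simp
  also have "\<dots> = (\<integral>y. (1 - indicator {..t} y) * f y \<partial>lborel)"
  proof -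
    have "AE y in lborel. indicator {..2*\<mu>-t} (2*\<mu> + (-1) * y) * f (2*\<mu> + (-1) * y) = (1 - indicator {..t} y) * f y"
      using AE_lborel_singleton[of t]
    proof (rule eventually_mono)
      fix y :: real assume "y \<noteq> t"
      then show "indicator {..2*\<mu>-t} (2*\<mu> + (-1) * y) * f (2*\<mu> + (-1) * y) = (1 - indicator {..t} y) * f y"
        using f_sym[of y] by (auto simp: indicator_def)
    qed
    then have "(\<integral>y. indicator {..2*\<mu>-t} (2*\<mu> + (-1) * y) * f (2*\<mu> + (-1) * y) \<partial>lborel) = (\<integral>y. (1 - indicator {..t} y) * f y \<partial>lborel)"
      using f_meas by (intro integral_cong_AE) auto
    then show ?thesis by simp
  qed
  also have "\<dots> = (\<integral>y. f y \<partial>lborel) - (\<integral>y. f y * indicator {..t} y \<partial>lborel)"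
  proof -
    have "(\<integral>y. (1 - indicator {..t} y) * f y \<partial>lborel) = (\<integral>y. f y - f y * indicator {..t} y \<partial>lborel)"
      by (simp add: algebra_simps)
    also have "\<dots> = (\<integral>y. f y \<partial>lborel) - (\<integral>y. f y * indicator {..t} y \<partial>lborel)"
    proof -
      have i2: "integrable lborel (\<lambda>y. f y * indicator {..t} y)"
        by (rule integrable_real_mult_indicator) (auto simp: f_int)
      show ?thesis using Bochner_Integration.integral_diff[OF f_int(1) i2] by simp
    qed
    finally show ?thesis .
  qed
  also have "\<dots> = 1 - F t"
    by (simp add: F_def set_lebesgue_integral_def f_int mult.commute)
  finally show ?thesis .
qed

lemma distr_reflect:
  fixes Y Y' :: "'a \<Rightarrow> real"
  assumes Y: "distributed M lborel Y (\<lambda>t. ennreal (g t))"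
    and Y': "distributed M lborel Y' (\<lambda>t. ennreal (g' t))"
    and gg: "\<And>t. g' t = g (2 * \<mu> - t)"
  shows "distr M borel (\<lambda>\<omega>. 2 * \<mu> - Y \<omega>) = distr M borel Y'"
proof -
  have Ym: "Y \<in> measurable M borel" using Y by (simp add: distributed_def)
  have Y'm: "Y' \<in> measurable M borel" using Y' by (simp add: distributed_def)
  have gm[measurable]: "(\<lambda>t. ennreal (g t)) \<in> borel_measurable borel" using Y by (simp add: distributed_def)
  have g'm[measurable]: "(\<lambda>t. ennreal (g' t)) \<in> borel_measurable borel" using Y' by (simp add: distributed_def)
  have d1: "distr M borel Y = density lborel (\<lambda>t. ennreal (g t))"
    using Y unfolding distributed_def by (metis distr_cong sets_lborel)
  have d2: "distr M borel Y' = density lborel (\<lambda>t. ennreal (g' t))"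
    using Y' unfolding distributed_def by (metis distr_cong sets_lborel)
  have "distr M borel (\<lambda>\<omega>. 2 * \<mu> - Y \<omega>) = distr (distr M borel Y) borel (\<lambda>t. 2 * \<mu> - t)"
    using Ym by (subst distr_distr) (auto simp: comp_def)
  also have "\<dots> = density lborel (\<lambda>t. ennreal (g' t))"
  proof (rule measure_eqI)
    fix A :: "real set" assume A: "A \<in> sets (distr (distr M borel Y) borel (\<lambda>t. 2 * \<mu> - t))"
    then have A[measurable]: "A \<in> sets borel" by simp
    have "emeasure (distr (distr M borel Y) borel (\<lambda>t. 2 * \<mu> - t)) A
        = (\<integral>\<^sup>+y. ennreal (g y) * indicator A (2 * \<mu> - y) \<partial>lborel)"
    proof -
      have pre: "(\<lambda>t. 2 * \<mu> - t) -` A \<in> sets lborel"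
        using measurable_sets[OF _ A, of "\<lambda>t. 2*\<mu>-t" borel] by simp
      have "emeasure (distr (distr M borel Y) borel (\<lambda>t. 2 * \<mu> - t)) A = emeasure (density lborel (\<lambda>t. ennreal (g t))) ((\<lambda>t. 2 * \<mu> - t) -` A)"
        unfolding d1 by (subst emeasure_distr) auto
      also have "\<dots> = (\<integral>\<^sup>+y. ennreal (g y) * indicator ((\<lambda>t. 2 * \<mu> - t) -` A) y \<partial>lborel)"
        using pre gm by (subst emeasure_density) auto
      also have "\<dots> = (\<integral>\<^sup>+y. ennreal (g y) * indicator A (2 * \<mu> - y) \<partial>lborel)"
        by (auto intro!: nn_integral_cong split: split_indicator)
      finally show ?thesis .
    qed
    also have "\<dots> = (\<integral>\<^sup>+y. ennreal (g' y) * indicator A y \<partial>lborel)" 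
      using nn_integral_real_affine[where f="\<lambda>y. ennreal (g' y) * indicator A y" and c="-1" and t="2*\<mu>"]
      by (simp add: gg)
    also have "\<dots> = emeasure (density lborel (\<lambda>t. ennreal (g' t))) A"
      by (simp add: emeasure_density)
    finally show "emeasure (distr (distr M borel Y) borel (\<lambda>t. 2 * \<mu> - t)) A = emeasure (density lborel (\<lambda>t. ennreal (g' t))) A" .
  qed simp
  finally show ?thesis using d2 by simp
qed



lemma osd_refl:
  assumes Fr: "\<And>t. F (2 * \<mu> - t) = 1 - F t" and f_sym: "\<And>t. f t = f (2 * \<mu> - t)"
    and u: "1 \<le> u" "u \<le> s"
  shows "ord_stat_density s u F f (2 * \<mu> - t) = ord_stat_density s (s - u + 1) F f t"
proof -
  have e1: "s - u + 1 - 1 = s - u" and e2: "s - (s - u + 1) = u - 1" using u by auto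
  show ?thesis unfolding ord_stat_density_def e1 e2 Fr using f_sym[of t]
    by (simp add: algebra_simps)
qed

lemma bij_key:
  fixes P Q R m :: nat
  assumes "R + m = P" "P \<le> Q"
  shows "bij_betw (\<lambda>u. Q - u + 1) {R+1..P} {Q - P + 1 .. Q - P + m}"
  by (rule bij_betw_byWitness[where f'="\<lambda>u. Q - u + 1"]) (use assms in auto)

lemma block_refl:
  assumes "0 < n" "n dvd s" "h \<in> {1..n}"
  shows "bij_betw (\<lambda>u. s - u + 1) (block s n h) (block s n (n - h + 1))"
    and "block s n h \<subseteq> {1..s}"
proof -
  obtain m where s: "s = n * m" using assms by blast
  have m: "s div n = m" using assms s by simp
  have hm: "h * m \<le> n * m" using assms by (intro mult_le_mono1) auto
  have hm1: "(h - 1) * m + m = h * m" using assms by (cases h) auto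
  have nh: "(n - h + 1 - 1) * m = n * m - h * m" using assms by (simp add: diff_mult_distrib)
  have nh2: "(n - h + 1) * m = n * m - h * m + m" using assms
    by (metis Suc_diff_le Suc_eq_plus1 add_mult_distrib assms(3) atLeastAtMost_iff diff_mult_distrib mult_1)
  show "block s n h \<subseteq> {1..s}" unfolding block_def m using hm hm1 s by auto
  note key = bij_key[of _ m]
  have b1: "block s n h = {(h-1)*m+1..h*m}" unfolding block_def m by simp
  have b2: "block s n (n - h + 1) = {n*m - h*m+1..n*m - h*m+m}" unfolding block_def m nh nh2 by simp
  show "bij_betw (\<lambda>u. s - u + 1) (block s n h) (block s n (n - h + 1))"
  proof -
    have "bij_betw (\<lambda>u. s - u + 1) {(h-1)*m+1..h*m} {n*m - h*m+1..n*m - h*m+m}"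
      using key[OF hm1 hm] s by simp
    then show ?thesis by (simp only: b1 b2)
  qed
qed

lemma pd_refl:
  assumes Fr: "\<And>t. F (2 * \<mu> - t) = 1 - F t" and f_sym: "\<And>t. f t = f (2 * \<mu> - t)"
    and n: "0 < n" "n dvd s"
    and \<alpha>_sym: "\<And>j k. j \<in> {1..n} \<Longrightarrow> k \<in> {1..n} \<Longrightarrow> \<alpha> j k = \<alpha> (n - j + 1) (n - k + 1)"
    and j: "j \<in> {1..n}"
  shows "pros_density s n \<alpha> F f j (2 * \<mu> - t) = pros_density s n \<alpha> F f (n - j + 1) t"
proof -
  have "(\<Sum>h\<in>{1..n}. \<Sum>u\<in>block s n h. \<alpha> j h * ord_stat_density s u F f (2 * \<mu> - t))
      = (\<Sum>h\<in>{1..n}. \<Sum>u\<in>block s n (n - h + 1). \<alpha> (n - j + 1) (n - h + 1) * ord_stat_density s u F f t)"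
  proof (rule sum.cong[OF refl])
    fix h assume h: "h \<in> {1..n}"
    have "(\<Sum>u\<in>block s n h. \<alpha> j h * ord_stat_density s u F f (2 * \<mu> - t))
        = (\<Sum>u\<in>block s n h. \<alpha> (n - j + 1) (n - h + 1) * ord_stat_density s (s - u + 1) F f t)"
      apply (rule sum.cong[OF refl])
      using block_refl(2)[OF n h] osd_refl[where F=F and f=f and \<mu>=\<mu>, OF Fr f_sym] \<alpha>_sym[OF j h] by auto
    also have "\<dots> = (\<Sum>u\<in>block s n (n - h + 1). \<alpha> (n - j + 1) (n - h + 1) * ord_stat_density s u F f t)"
      using sum.reindex_bij_betw[OF block_refl(1)[OF n h], of "\<lambda>u. \<alpha> (n - j + 1) (n - h + 1) * ord_stat_density s u F f t"]
      by simp
    finally show "(\<Sum>u\<in>block s n h. \<alpha> j h * ord_stat_density s u F f (2 * \<mu> - t))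
        = (\<Sum>u\<in>block s n (n - h + 1). \<alpha> (n - j + 1) (n - h + 1) * ord_stat_density s u F f t)" .
  qed
  also have "\<dots> = (\<Sum>h\<in>{1..n}. \<Sum>u\<in>block s n h. \<alpha> (n - j + 1) h * ord_stat_density s u F f t)"
  proof -
    have "bij_betw (\<lambda>h. n - h + 1) {1..n} {1..n}"
      by (rule bij_betw_byWitness[where f'="\<lambda>h. n - h + 1"]) auto
    from sum.reindex_bij_betw[OF this, of "\<lambda>h. \<Sum>u\<in>block s n h. \<alpha> (n - j + 1) h * ord_stat_density s u F f t"]
    show ?thesis by simp
  qed
  finally show ?thesis unfolding pros_density_def by simp
qed



lemma vec_distr_eq:
  fixes Z :: "'i \<Rightarrow> 'a \<Rightarrow> real"
  assumes M: "prob_space M" and I: "I \<noteq> {}"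
    and ind: "prob_space.indep_vars M (\<lambda>_. borel) Z I"
    and \<sigma>: "inj_on \<sigma> I" "\<sigma> \<in> I \<rightarrow> I"
    and comp: "\<And>p. p \<in> I \<Longrightarrow> distr M borel (\<lambda>\<omega>. c - Z p \<omega>) = distr M borel (Z (\<sigma> p))"
  shows "distr M (PiM I (\<lambda>_. borel)) (\<lambda>\<omega>. \<lambda>p\<in>I. c - Z p \<omega>)
       = distr M (PiM I (\<lambda>_. borel)) (\<lambda>\<omega>. \<lambda>p\<in>I. Z (\<sigma> p) \<omega>)"
proof -
  interpret prob_space M by (rule M)
  have rv: "\<And>p. p \<in> I \<Longrightarrow> Z p \<in> borel_measurable M"
    using ind by (auto simp: indep_vars_def)
  have ind2: "indep_vars (\<lambda>_. borel) (\<lambda>p \<omega>. c - Z p \<omega>) I"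
    by (rule indep_vars_compose2[OF ind]) auto
  have "distr M (PiM I (\<lambda>_. borel)) (\<lambda>\<omega>. \<lambda>p\<in>I. c - Z p \<omega>) = PiM I (\<lambda>p. distr M borel (\<lambda>\<omega>. c - Z p \<omega>))"
    using indep_vars_iff_distr_eq_PiM'[OF I, where M'="\<lambda>_. borel" and X="\<lambda>p \<omega>. c - Z p \<omega>"] ind2 rv by auto
  also have "\<dots> = PiM I (\<lambda>p. distr M borel (Z (\<sigma> p)))"
    by (rule PiM_cong) (auto simp: comp)
  also have "\<dots> = distr (PiM I (\<lambda>p. distr M borel (Z p))) (PiM I (\<lambda>p. distr M borel (Z (\<sigma> p)))) (\<lambda>w. \<lambda>p\<in>I. w (\<sigma> p))"
    by (rule distr_PiM_reindex[symmetric]) (auto intro!: prob_space_distr rv \<sigma>)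
  also have "\<dots> = distr (distr M (PiM I (\<lambda>_. borel)) (\<lambda>\<omega>. \<lambda>p\<in>I. Z p \<omega>)) (PiM I (\<lambda>_. borel)) (\<lambda>w. \<lambda>p\<in>I. w (\<sigma> p))"
  proof -
    have "distr M (PiM I (\<lambda>_. borel)) (\<lambda>\<omega>. \<lambda>p\<in>I. Z p \<omega>) = PiM I (\<lambda>p. distr M borel (Z p))"
      using indep_vars_iff_distr_eq_PiM'[OF I, where M'="\<lambda>_. borel" and X=Z] ind rv by auto
    then show ?thesis
      by (intro distr_cong) (auto intro!: sets_PiM_cong)
  qed
  also have "\<dots> = distr M (PiM I (\<lambda>_. borel)) (\<lambda>\<omega>. \<lambda>p\<in>I. Z (\<sigma> p) \<omega>)"
  proof -
    have m1: "(\<lambda>\<omega>. \<lambda>p\<in>I. Z p \<omega>) \<in> measurable M (PiM I (\<lambda>_. borel))"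
      by (rule measurable_restrict) (use rv in auto)
    have m2: "(\<lambda>w. \<lambda>p\<in>I. w (\<sigma> p)) \<in> measurable (PiM I (\<lambda>_. borel)) (PiM I (\<lambda>_. borel))"
      by (rule measurable_restrict) (use \<sigma> in \<open>auto intro!: measurable_component_singleton\<close>)
    show ?thesis
      apply (subst distr_distr[OF m2 m1])
      apply (rule distr_cong)
      using \<sigma> by (auto simp: comp_def restrict_def fun_eq_iff Pi_iff)
  qed
  finally show ?thesis .
qed


lemma abs_mult_le_sq: "\<bar>a * b\<bar> \<le> a\<^sup>2 + (b::real)\<^sup>2"
proof -
  have "0 \<le> (\<bar>a\<bar> - \<bar>b\<bar>)\<^sup>2" by simp
  hence "2 * (\<bar>a\<bar> * \<bar>b\<bar>) \<le> a\<^sup>2 + b\<^sup>2" by (simp add: power2_eq_square algebra_simps abs_mult_self_eq)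
  moreover have "0 \<le> \<bar>a\<bar> * \<bar>b\<bar>" by simp
  ultimately have "\<bar>a\<bar> * \<bar>b\<bar> \<le> a\<^sup>2 + b\<^sup>2" by linarith
  then show ?thesis by (simp add: abs_mult)
qed
lemma sq_avg: "((a + b) / 2 - (m::real))\<^sup>2 \<le> ((a - m)\<^sup>2 + (b - m)\<^sup>2) / 2"
proof -
  have "0 \<le> (a - b)\<^sup>2" by simp
  thus ?thesis by (simp add: power2_eq_square field_simps)
qed


lemma transfer_distr:
  fixes \<phi> :: "real \<Rightarrow> real"
  assumes D: "distr M N T1 = distr M N T2"
    and T1: "T1 \<in> measurable M N" and T2: "T2 \<in> measurable M N"
    and G: "G \<in> borel_measurable N" and \<phi>: "\<phi> \<in> borel_measurable borel"
  shows "integrable M (\<lambda>\<omega>. \<phi> (G (T1 \<omega>))) \<longleftrightarrow> integrable M (\<lambda>\<omega>. \<phi> (G (T2 \<omega>)))"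
    and "integral\<^sup>L M (\<lambda>\<omega>. \<phi> (G (T1 \<omega>))) = integral\<^sup>L M (\<lambda>\<omega>. \<phi> (G (T2 \<omega>)))"
proof -
  have H: "(\<lambda>w. \<phi> (G w)) \<in> borel_measurable N" using G \<phi> by measurable
  show "integrable M (\<lambda>\<omega>. \<phi> (G (T1 \<omega>))) \<longleftrightarrow> integrable M (\<lambda>\<omega>. \<phi> (G (T2 \<omega>)))"
    using integrable_distr_eq[OF T1 H] integrable_distr_eq[OF T2 H] D by simp
  show "integral\<^sup>L M (\<lambda>\<omega>. \<phi> (G (T1 \<omega>))) = integral\<^sup>L M (\<lambda>\<omega>. \<phi> (G (T2 \<omega>)))"
    using integral_distr[OF T1 H] integral_distr[OF T2 H] D by simp
qed

theorem theorem3p4: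
  fixes M :: "'a measure" and X :: "nat \<Rightarrow> nat \<Rightarrow> 'a \<Rightarrow> real"
    and f F K :: "real \<Rightarrow> real" and \<alpha> :: "nat \<Rightarrow> nat \<Rightarrow> real"
    and s n L :: nat and h \<mu> x :: real
  assumes M: "prob_space M"
    and snL: "0 < s" "0 < n" "0 < L" "n dvd s"
    and f_meas: "f \<in> borel_measurable borel"
    and f_nonneg: "\<And>t. 0 \<le> f t"
    and f_int: "integrable lborel f" "integral\<^sup>L lborel f = 1"
    and F_def: "\<And>t. F t = (LINT y:{..t}|lborel. f y)"
    and f_sym: "\<And>t. f t = f (2 * \<mu> - t)"
    and ds: "doubly_stochastic n \<alpha>"
    and \<alpha>_sym: "\<And>j k. j \<in> {1..n} \<Longrightarrow> k \<in> {1..n} \<Longrightarrow> \<alpha> j k = \<alpha> (n - j + 1) (n - k + 1)"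
    and K_meas: "K \<in> borel_measurable borel"
    and K_sym: "\<And>u. K (- u) = K u"
    and K_int: "integrable lborel K" "integral\<^sup>L lborel K = 1"
    and K_sq: "integrable lborel (\<lambda>u. (K u)\<^sup>2)"
    and K_mom: "integrable lborel (\<lambda>u. u\<^sup>2 * K u)"
    and h_pos: "0 < h"
    and X_indep: "prob_space.indep_vars M (\<lambda>_. borel) (\<lambda>p. X (fst p) (snd p)) ({1..n} \<times> {1..L})"
    and X_distr: "\<And>j i. j \<in> {1..n} \<Longrightarrow> i \<in> {1..L} \<Longrightarrow>
         distributed M lborel (X j i) (\<lambda>t. ennreal (pros_density s n \<alpha> F f j t))"
    and fin_var: "\<And>j i. j \<in> {1..n} \<Longrightarrow> i \<in> {1..L} \<Longrightarrow>
         integrable M (\<lambda>\<omega>. (K ((x - X j i \<omega>) / h))\<^sup>2)"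
  shows "integral\<^sup>L M (pros_kde_sym n L h K X x \<mu>) = integral\<^sup>L M (pros_kde n L h K X x)
         \<and> integral\<^sup>L M (\<lambda>\<omega>. (pros_kde_sym n L h K X x \<mu> \<omega>
              - integral\<^sup>L M (pros_kde_sym n L h K X x \<mu>))\<^sup>2)
         \<le> integral\<^sup>L M (\<lambda>\<omega>. (pros_kde n L h K X x \<omega>
              - integral\<^sup>L M (pros_kde n L h K X x))\<^sup>2)"
proof -
  interpret prob_space M by (rule M)
  note [measurable] = K_meas
  define I where "I = {1..n} \<times> {1..L}"
  define Z where "Z p = X (fst p) (snd p)" for p
  define \<sigma> where "\<sigma> p = (n - fst p + 1, snd p)" for p :: "nat \<times> nat"
  define c where "c = 1 / (real n * real L * h)"
  define G where "G w = c * (\<Sum>p\<in>I. K ((x - w p) / h))" for w :: "nat \<times> nat \<Rightarrow> real"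
  define A where "A = pros_kde n L h K X x"
  define B where "B = pros_kde n L h K X (2 * \<mu> - x)"
  define T1 where "T1 \<omega> = (\<lambda>p\<in>I. 2 * \<mu> - Z p \<omega>)" for \<omega>
  define T2 where "T2 \<omega> = (\<lambda>p\<in>I. Z (\<sigma> p) \<omega>)" for \<omega>
  have finI: "finite I" and neI: "I \<noteq> {}" using snL by (auto simp: I_def)
  have \<sigma>I: "bij_betw \<sigma> I I"
    unfolding I_def by (rule bij_betw_byWitness[where f'=\<sigma>]) (auto simp: \<sigma>_def)
  then have \<sigma>inj: "inj_on \<sigma> I" and \<sigma>Pi: "\<sigma> \<in> I \<rightarrow> I"
    by (auto simp: bij_betw_def)
  have kde: "pros_kde n L h K X x' \<omega> = c * (\<Sum>p\<in>I. K ((x' - Z p \<omega>) / h))" for x' \<omega>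
  proof -
    have "(\<Sum>i\<in>{1..L}. \<Sum>j\<in>{1..n}. K ((x' - X j i \<omega>) / h)) = (\<Sum>j\<in>{1..n}. \<Sum>i\<in>{1..L}. K ((x' - X j i \<omega>) / h))"
      by (rule sum.swap)
    also have "\<dots> = (\<Sum>p\<in>{1..n}\<times>{1..L}. K ((x' - X (fst p) (snd p) \<omega>) / h))"
      by (simp add: sum.cartesian_product split_def)
    finally show ?thesis unfolding pros_kde_def c_def I_def Z_def by simp
  qed
  have ind: "indep_vars (\<lambda>_. borel) Z I" using X_indep unfolding Z_def I_def .
  have rv[measurable]: "Z p \<in> borel_measurable M" if "p \<in> I" for p
    using ind that by (auto simp: indep_vars_def)
  have Fr: "\<And>t. F (2 * \<mu> - t) = 1 - F t" using F_refl[OF f_meas f_int F_def f_sym] .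
  have comp: "distr M borel (\<lambda>\<omega>. 2 * \<mu> - Z p \<omega>) = distr M borel (Z (\<sigma> p))" if p: "p \<in> I" for p
  proof -
    obtain j i where ji: "p = (j, i)" "j \<in> {1..n}" "i \<in> {1..L}" using p by (auto simp: I_def)
    have j': "n - j + 1 \<in> {1..n}" using ji by auto
    show ?thesis unfolding ji Z_def \<sigma>_def fst_conv snd_conv
      by (rule distr_reflect[OF X_distr[OF ji(2,3)] X_distr[OF j' ji(3)]])
         (use pd_refl[where F=F and f=f and \<mu>=\<mu> and \<alpha>=\<alpha>, OF Fr f_sym snL(2,4) \<alpha>_sym ji(2)] in simp)
  qed
  have veq: "distr M (PiM I (\<lambda>_. borel)) T1 = distr M (PiM I (\<lambda>_. borel)) T2"
    unfolding T1_def T2_def by (rule vec_distr_eq[OF M neI ind \<sigma>inj \<sigma>Pi comp])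
  have T1m: "T1 \<in> measurable M (PiM I (\<lambda>_. borel))"
    unfolding T1_def by (rule measurable_restrict) auto
  have T2m: "T2 \<in> measurable M (PiM I (\<lambda>_. borel))"
    unfolding T2_def by (rule measurable_restrict) (use \<sigma>Pi rv in blast)
  have Gm: "G \<in> borel_measurable (PiM I (\<lambda>_. borel))"
    unfolding G_def by measurable
  have A_eq: "A \<omega> = G (T2 \<omega>)" for \<omega>
  proof -
    have "A \<omega> = c * (\<Sum>p\<in>I. K ((x - Z p \<omega>) / h))" unfolding A_def kde ..
    also have "\<dots> = c * (\<Sum>p\<in>I. K ((x - Z (\<sigma> p) \<omega>) / h))"
      using sum.reindex_bij_betw[OF \<sigma>I, of "\<lambda>p. K ((x - Z p \<omega>) / h)"] by simp
    also have "\<dots> = G (T2 \<omega>)" unfolding G_def T2_def by simp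
    finally show ?thesis .
  qed
  have B_eq: "B \<omega> = G (T1 \<omega>)" for \<omega>
  proof -
    have "B \<omega> = c * (\<Sum>p\<in>I. K ((2 * \<mu> - x - Z p \<omega>) / h))" unfolding B_def kde ..
    also have "\<dots> = G (T1 \<omega>)" unfolding G_def T1_def
    proof -
      have "(\<Sum>p\<in>I. K ((2 * \<mu> - x - Z p \<omega>) / h)) = (\<Sum>p\<in>I. K ((x - (\<lambda>p\<in>I. 2 * \<mu> - Z p \<omega>) p) / h))"
      proof (rule sum.cong[OF refl])
        fix p assume p: "p \<in> I"
        have "K ((2 * \<mu> - x - Z p \<omega>) / h) = K (- ((2 * \<mu> - x - Z p \<omega>) / h))" by (rule K_sym[symmetric])
        also have "- ((2 * \<mu> - x - Z p \<omega>) / h) = (x - (2 * \<mu> - Z p \<omega>)) / h" using h_pos by (simp add: field_simps)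
        finally show "K ((2 * \<mu> - x - Z p \<omega>) / h) = K ((x - (\<lambda>p\<in>I. 2 * \<mu> - Z p \<omega>) p) / h)" using p by simp
      qed
      then show "c * (\<Sum>p\<in>I. K ((2 * \<mu> - x - Z p \<omega>) / h)) = c * (\<Sum>p\<in>I. K ((x - (\<lambda>p\<in>I. 2 * \<mu> - Z p \<omega>) p) / h))" by simp
    qed
    finally show ?thesis .
  qed
  have tr_int: "integrable M (\<lambda>\<omega>. \<phi> (B \<omega>)) \<longleftrightarrow> integrable M (\<lambda>\<omega>. \<phi> (A \<omega>))"
    and tr_eq: "integral\<^sup>L M (\<lambda>\<omega>. \<phi> (B \<omega>)) = integral\<^sup>L M (\<lambda>\<omega>. \<phi> (A \<omega>))"
    if "\<phi> \<in> borel_measurable borel" for \<phi> :: "real \<Rightarrow> real"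
    unfolding A_eq B_eq using transfer_distr[OF veq T1m T2m Gm that] by auto
  define g where "g p \<omega> = K ((x - Z p \<omega>) / h)" for p \<omega>
  have gm: "g p \<in> borel_measurable M" if "p \<in> I" for p
    using rv[OF that] unfolding g_def by measurable
  have g2: "integrable M (\<lambda>\<omega>. (g p \<omega>)\<^sup>2)" if p: "p \<in> I" for p
  proof -
    obtain j i where ji: "p = (j, i)" "j \<in> {1..n}" "i \<in> {1..L}" using p by (auto simp: I_def)
    show ?thesis unfolding g_def Z_def ji using fin_var[OF ji(2,3)] by simp
  qed
  have g1: "integrable M (g p)" if "p \<in> I" for p
    by (rule square_integrable_imp_integrable[OF gm[OF that] g2[OF that]])
  have gg: "integrable M (\<lambda>\<omega>. g p \<omega> * g q \<omega>)" if "p \<in> I" "q \<in> I" for p q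
  proof (rule Bochner_Integration.integrable_bound[OF Bochner_Integration.integrable_add[OF g2[OF that(1)] g2[OF that(2)]]])
    show "(\<lambda>\<omega>. g p \<omega> * g q \<omega>) \<in> borel_measurable M" using gm[OF that(1)] gm[OF that(2)] by measurable
    show "AE \<omega> in M. norm (g p \<omega> * g q \<omega>) \<le> norm ((g p \<omega>)\<^sup>2 + (g q \<omega>)\<^sup>2)"
      using abs_mult_le_sq by auto
  qed
  have Ag: "A = (\<lambda>\<omega>. c * (\<Sum>p\<in>I. g p \<omega>))" unfolding A_def g_def by (simp add: kde fun_eq_iff)
  have A_int: "integrable M A" unfolding Ag using g1 by (intro integrable_mult_right Bochner_Integration.integrable_sum) auto
  have A2_int: "integrable M (\<lambda>\<omega>. (A \<omega>)\<^sup>2)"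
  proof -
    have "(\<lambda>\<omega>. (A \<omega>)\<^sup>2) = (\<lambda>\<omega>. c\<^sup>2 * (\<Sum>p\<in>I. \<Sum>q\<in>I. g p \<omega> * g q \<omega>))"
      unfolding Ag by (simp add: power2_eq_square sum_product algebra_simps)
    then show ?thesis using gg by (simp del: power2_eq_square)
  qed
  define m where "m = integral\<^sup>L M A"
  have sqexp: "(\<lambda>\<omega>. (Y \<omega> - m)\<^sup>2) = (\<lambda>\<omega>. (Y \<omega>)\<^sup>2 - 2 * m * Y \<omega> + m\<^sup>2)" for Y :: "'a \<Rightarrow> real"
    by (simp add: fun_eq_iff power2_diff algebra_simps)
  have Am_int: "integrable M (\<lambda>\<omega>. (A \<omega> - m)\<^sup>2)"
    unfolding sqexp using A_int A2_int by (intro Bochner_Integration.integrable_add Bochner_Integration.integrable_diff integrable_mult_right) auto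
  have phi1: "(\<lambda>t::real. t) \<in> borel_measurable borel" by simp
  have phi2: "(\<lambda>t::real. (t - m)\<^sup>2) \<in> borel_measurable borel" by simp
  have B_int: "integrable M B" using tr_int[OF phi1] A_int by simp
  have B_m: "integral\<^sup>L M B = m" using tr_eq[OF phi1] unfolding m_def by simp
  have Bm_int: "integrable M (\<lambda>\<omega>. (B \<omega> - m)\<^sup>2)" using tr_int[OF phi2] Am_int by simp
  have Bm_eq: "integral\<^sup>L M (\<lambda>\<omega>. (B \<omega> - m)\<^sup>2) = integral\<^sup>L M (\<lambda>\<omega>. (A \<omega> - m)\<^sup>2)" using tr_eq[OF phi2] by simp
  have sym_eq: "pros_kde_sym n L h K X x \<mu> = (\<lambda>\<omega>. (A \<omega> + B \<omega>) / 2)"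
    unfolding pros_kde_sym_def A_def B_def by (simp add: fun_eq_iff)
  have E_sym: "integral\<^sup>L M (\<lambda>\<omega>. (A \<omega> + B \<omega>) / 2) = m"
  proof -
    have "integral\<^sup>L M (\<lambda>\<omega>. (A \<omega> + B \<omega>) / 2) = integral\<^sup>L M (\<lambda>\<omega>. A \<omega> + B \<omega>) / 2"
      by (rule integral_divide_zero)
    also have "\<dots> = (integral\<^sup>L M A + integral\<^sup>L M B) / 2"
      using Bochner_Integration.integral_add[OF A_int B_int] by simp
    finally show ?thesis using B_m m_def by simp
  qed
  have R_int: "integrable M (\<lambda>\<omega>. ((A \<omega> - m)\<^sup>2 + (B \<omega> - m)\<^sup>2) / 2)"
    using Am_int Bm_int by (intro integrable_divide_zero Bochner_Integration.integrable_add) auto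
  have Am: "A \<in> borel_measurable M" using A_int by (rule borel_measurable_integrable)
  have Bm: "B \<in> borel_measurable M" using B_int by (rule borel_measurable_integrable)
  have L_int: "integrable M (\<lambda>\<omega>. ((A \<omega> + B \<omega>) / 2 - m)\<^sup>2)"
  proof (rule Bochner_Integration.integrable_bound[OF R_int])
    show "(\<lambda>\<omega>. ((A \<omega> + B \<omega>) / 2 - m)\<^sup>2) \<in> borel_measurable M" using Am Bm by measurable
    show "AE \<omega> in M. norm (((A \<omega> + B \<omega>) / 2 - m)\<^sup>2) \<le> norm (((A \<omega> - m)\<^sup>2 + (B \<omega> - m)\<^sup>2) / 2)"
      using sq_avg by auto
  qed
  have "integral\<^sup>L M (\<lambda>\<omega>. ((A \<omega> + B \<omega>) / 2 - m)\<^sup>2) \<le> integral\<^sup>L M (\<lambda>\<omega>. ((A \<omega> - m)\<^sup>2 + (B \<omega> - m)\<^sup>2) / 2)"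
    by (rule Bochner_Integration.integral_mono[OF L_int R_int]) (rule sq_avg)
  also have "\<dots> = (integral\<^sup>L M (\<lambda>\<omega>. (A \<omega> - m)\<^sup>2) + integral\<^sup>L M (\<lambda>\<omega>. (B \<omega> - m)\<^sup>2)) / 2"
    using Bochner_Integration.integral_add[OF Am_int Bm_int] by (simp add: integral_divide_zero)
  also have "\<dots> = integral\<^sup>L M (\<lambda>\<omega>. (A \<omega> - m)\<^sup>2)" using Bm_eq by simp
  finally have V: "integral\<^sup>L M (\<lambda>\<omega>. ((A \<omega> + B \<omega>) / 2 - m)\<^sup>2) \<le> integral\<^sup>L M (\<lambda>\<omega>. (A \<omega> - m)\<^sup>2)" .
  show ?thesis unfolding sym_eq A_def[symmetric] E_sym using V unfolding m_def by simp
qed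


end
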